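(* For every $n\in\mathbb{N}$ and every $l\in\{0,1,\dots,8\}$ there is an outerplanar graph $G$ with $|V(G)|>n$, $|V_1(G)|=l$ and $\rho_G^4=3-\sigma_G^4$ that has no equitable $4$-coloring.
   Context: For a graph $G$, $V_1(G)$ is the set of vertices of degree $1$, and for $A\subseteq V(G)$, $\|G[A]\|$ is the number of edges of $G[A]$. Define $\rho_G^4(A)=4\|G[A]\|-5|A|+2|A\cap V_1(G)|$, $\rho_G^4=\max_{A\subseteq V(G)}\rho_G^4(A)$ (including $A=\emptyset$), and $\sigma_G^4=|V_1(G)|\bmod 2$. An equitable $4$-coloring is a proper vertex coloring with $4$ colors in which the sizes of any two color classes differ by at most $1$. *)

theory Defs
  imports "HOL-Analysis.Analysis"
begin

definition simple_graph :: "'a set \<Rightarrow> 'a set set \<Rightarrow> bool" where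
  "simple_graph V E \<longleftrightarrow> finite V \<and>
     (\<forall>e\<in>E. \<exists>u v. u \<in> V \<and> v \<in> V \<and> u \<noteq> v \<and> e = {u, v})"

definition degree :: "'a set set \<Rightarrow> 'a \<Rightarrow> nat" where
  "degree E v = card {e\<in>E. v \<in> e}"

definition V1 :: "'a set \<Rightarrow> 'a set set \<Rightarrow> 'a set" where
  "V1 V E = {v\<in>V. degree E v = 1}"

definition induced_edges :: "'a set set \<Rightarrow> 'a set \<Rightarrow> nat" where
  "induced_edges E A = card {e\<in>E. e \<subseteq> A}"

definition rho4_set :: "'a set \<Rightarrow> 'a set set \<Rightarrow> 'a set \<Rightarrow> int" where
  "rho4_set V E A = 4 * int (induced_edges E A) - 5 * int (card A) + 2 * int (card (A \<inter> V1 V E))"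

definition rho4 :: "'a set \<Rightarrow> 'a set set \<Rightarrow> int" where
  "rho4 V E = Max (rho4_set V E ` Pow V)"

definition sigma4 :: "'a set \<Rightarrow> 'a set set \<Rightarrow> int" where
  "sigma4 V E = int (card (V1 V E) mod 2)"

definition equitable_4_coloring :: "'a set \<Rightarrow> 'a set set \<Rightarrow> ('a \<Rightarrow> nat) \<Rightarrow> bool" where
  "equitable_4_coloring V E f \<longleftrightarrow>
     (\<forall>v\<in>V. f v < 4) \<and>
     (\<forall>u v. {u, v} \<in> E \<longrightarrow> f u \<noteq> f v) \<and>
     (\<forall>i<4. \<forall>j<4. card {v\<in>V. f v = i} \<le> card {v\<in>V. f v = j} + 1)"

text \<open>Outerplanar: there is a drawing in the plane (identified with \<complex>) with vertices as
  distinct points and edges as arcs joining their end points, arcs meeting only in common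
  end vertices and passing through no other vertex, such that every vertex lies on the
  boundary of the outer (unbounded) face.\<close>
definition outerplanar :: "'a set \<Rightarrow> 'a set set \<Rightarrow> bool" where
  "outerplanar V E \<longleftrightarrow>
     (\<exists>(p :: 'a \<Rightarrow> complex) (\<gamma> :: 'a set \<Rightarrow> real \<Rightarrow> complex).
        inj_on p V \<and>
        (\<forall>e\<in>E. arc (\<gamma> e) \<and> {pathstart (\<gamma> e), pathfinish (\<gamma> e)} = p ` e) \<and>
        (\<forall>e\<in>E. \<forall>v\<in>V. p v \<in> path_image (\<gamma> e) \<longrightarrow> v \<in> e) \<and>
        (\<forall>e\<in>E. \<forall>e'\<in>E. e \<noteq> e' \<longrightarrow>
             path_image (\<gamma> e) \<inter> path_image (\<gamma> e') \<subseteq> p ` (e \<inter> e')) \<and>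
        (\<forall>v\<in>V. p v \<in> closure (outside (p ` V \<union> (\<Union>e\<in>E. path_image (\<gamma> e))))))"

end

theory Submission
  imports Defs
begin


definition P :: "real \<Rightarrow> complex" where "P x = Complex x (x^2)"

lemma seg_char:
  assumes "z \<in> closed_segment (P a) (P b)" "a \<le> b"
  shows "a \<le> Re z \<and> Re z \<le> b \<and> Im z = (a+b)*Re z - a*b"
proof -
  obtain u where u: "0 \<le> u" "u \<le> 1" "z = (1-u) *\<^sub>R P a + u *\<^sub>R P b"
    using assms(1) unfolding closed_segment_def by auto
  have re: "Re z = (1-u)*a + u*b" and im: "Im z = (1-u)*a^2 + u*b^2"
    using u(3) by (simp_all add: P_def)
  have "a \<le> (1-u)*a + u*b"
  proof -
    have "u*a \<le> u*b" using u assms(2) by (simp add: mult_left_mono)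
    thus ?thesis by (simp add: algebra_simps)
  qed
  moreover have "(1-u)*a + u*b \<le> b"
  proof -
    have "(1-u)*a \<le> (1-u)*b" using u assms(2) by (simp add: mult_left_mono)
    thus ?thesis by (simp add: algebra_simps)
  qed
  moreover have "Im z = (a+b)*Re z - a*b"
    unfolding re im by (simp add: algebra_simps power2_eq_square)
  ultimately show ?thesis using re by simp
qed

lemma vertex_on_seg:
  assumes "P w \<in> closed_segment (P a) (P b)" "a \<le> b"
  shows "w = a \<or> w = b"
proof -
  have "w^2 = (a+b)*w - a*b" using seg_char[OF assms] by (simp add: P_def)
  hence "(w-a)*(w-b) = 0" by (simp add: algebra_simps power2_eq_square)
  thus ?thesis by simp
qed

lemma seg_inter:
  assumes "a < b" "c < d" "\<not>(a<c \<and> c<b \<and> b<d)" "\<not>(c<a \<and> a<d \<and> d<b)" "(a,b) \<noteq> (c,d)"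
    "z \<in> closed_segment (P a) (P b)" "z \<in> closed_segment (P c) (P d)"
  shows "(z = P a \<and> (a = c \<or> a = d)) \<or> (z = P b \<and> (b = c \<or> b = d))"
proof -
  define x where "x = Re z"
  have s1: "a \<le> x" "x \<le> b" "Im z = (a+b)*x - a*b" using seg_char[OF assms(6)] assms(1) x_def by auto
  have s2: "c \<le> x" "x \<le> d" "Im z = (c+d)*x - c*d" using seg_char[OF assms(7)] assms(2) x_def by auto
  have eq: "(x-a)*(b-x) = (x-c)*(d-x)" using s1(3) s2(3) by (simp add: algebra_simps)
  have zx: "z = Complex x (Im z)" using x_def by (simp add: complex_eq_iff)
  show ?thesis
  proof (cases "x = a")
    case True
    have "(x-c)*(d-x) = 0" using eq True by simp
    hence "a = c \<or> a = d" using True by auto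
    moreover have "z = P a" using zx True s1(3) by (simp add: P_def algebra_simps power2_eq_square)
    ultimately show ?thesis by simp
  next
    case xa: False
    show ?thesis
    proof (cases "x = b")
      case True
      have "(x-c)*(d-x) = 0" using eq True by simp
      hence "b = c \<or> b = d" using True by auto
      moreover have "z = P b" using zx True s1(3) by (simp add: P_def algebra_simps power2_eq_square)
      ultimately show ?thesis by simp
    next
      case xb: False
      have p1: "x - a > 0" "b - x > 0" using xa xb s1 by auto
      hence "(x-c)*(d-x) > 0" using eq by (metis mult_pos_pos)
      hence "0 < x-c \<and> 0 < d-x \<or> x-c<0 \<and> d-x<0" by (simp only: zero_less_mult_iff)
      hence p2: "x - c > 0" "d - x > 0" using s2 by linarith+
      have nest: "(a \<le> c \<and> d \<le> b) \<or> (c \<le> a \<and> b \<le> d)" using assms(3,4) p1 p2 by auto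
      have False
      proof (cases "a \<le> c \<and> d \<le> b")
        case True
        have e: "(x-a)*(b-x) - (x-c)*(d-x) = (c-a)*(b-x) + (x-c)*(b-d)" by (simp add: algebra_simps)
        have t1: "(c-a)*(b-x) \<ge> 0" using True p1 by simp
        have t2: "(x-c)*(b-d) \<ge> 0" using True p2 by simp
        have "(c-a)*(b-x) = 0" "(x-c)*(b-d) = 0" using e eq t1 t2 by linarith+
        hence "c = a" "b = d" using p1 p2 by auto
        thus False using assms(5) by simp
      next
        case False
        hence nn: "c \<le> a" "b \<le> d" using nest by auto
        have e: "(x-c)*(d-x) - (x-a)*(b-x) = (a-c)*(d-x) + (x-a)*(d-b)" by (simp add: algebra_simps)
        have t1: "(a-c)*(d-x) \<ge> 0" using nn p2 by simp
        have t2: "(x-a)*(d-b) \<ge> 0" using nn p1 by simp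
        have "(a-c)*(d-x) = 0" "(x-a)*(d-b) = 0" using e eq t1 t2 by linarith+
        hence "c = a" "b = d" using p1 p2 by auto
        thus False using assms(5) by simp
      qed
      thus ?thesis ..
    qed
  qed
qed

definition TT :: "complex set" where "TT = {z. (Re z)^2 \<le> Im z}"

lemma convex_TT: "convex TT"
  unfolding convex_def TT_def
proof (intro ballI allI impI, simp)
  fix x y :: complex and u w :: real
  assume h: "(Re x)\<^sup>2 \<le> Im x" "(Re y)\<^sup>2 \<le> Im y" "0 \<le> u" "0 \<le> w" "u + w = 1"
  have vv: "w = 1 - u" using h(5) by simp
  have "(u * Re x + w * Re y)^2 = u * (Re x)^2 + w * (Re y)^2 - u * w * (Re x - Re y)^2"
    unfolding vv by (simp add: algebra_simps power2_eq_square)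
  also have "\<dots> \<le> u * (Re x)^2 + w * (Re y)^2" using h by simp
  also have "\<dots> \<le> u * Im x + w * Im y" using h by (simp add: add_mono mult_left_mono)
  finally show "(u * Re x + w * Re y)\<^sup>2 \<le> u * Im x + w * Im y" .
qed

lemma P_TT: "P a \<in> TT" by (simp add: P_def TT_def)

lemma seg_TT: assumes "a \<le> b" shows "closed_segment (P a) (P b) \<subseteq> TT"
proof
  fix z assume "z \<in> closed_segment (P a) (P b)"
  from seg_char[OF this assms] have h: "a \<le> Re z" "Re z \<le> b" "Im z = (a+b)*Re z - a*b" by auto
  have "Im z - (Re z)^2 = (Re z - a)*(b - Re z)" using h(3) by (simp add: algebra_simps power2_eq_square)
  moreover have "(Re z - a)*(b - Re z) \<ge> 0" using h by simp
  ultimately show "z \<in> TT" by (simp add: TT_def)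
qed

lemma P_closure: "P a \<in> closure (- TT)"
  unfolding closure_approachable
proof (intro allI impI)
  fix e :: real assume "e > 0"
  let ?y = "P a - \<i> * complex_of_real (e/2)"
  have "?y \<in> - TT" using \<open>e>0\<close> by (simp add: P_def TT_def)
  moreover have "dist ?y (P a) < e" using \<open>e>0\<close> by (simp add: dist_norm norm_mult)
  ultimately show "\<exists>y\<in>- TT. dist y (P a) < e" by blast
qed



lemma sum_blocks: "sum f {a..<a + m*(k::nat)} = (\<Sum>j<k. sum f {a + m*j..<a + m*j + m})"
proof (induction k)
  case 0 then show ?case by simp
next
  case (Suc k)
  have "sum f {a..<a + m*Suc k} = sum f {a..<a + m*k} + sum f {a + m*k..<a + m*k + m}"
    by (subst sum.atLeastLessThan_concat[symmetric]) (auto simp: algebra_simps)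
  then show ?case using Suc by simp
qed

lemma sum1: "sum f {x..<x + (1::nat)} = f x" by simp
lemma sum2: "sum f {x..<x + (2::nat)} = f x + f (x + 1)"
proof -
  have "{x..<x + 2} = {x, x + 1}" by auto
  thus ?thesis by simp
qed
lemma sum4: "sum f {x..<x + (4::nat)} = f x + f (x + 1) + f (x + 2) + f (x + 3)"
proof -
  have "{x..<x + 4} = {x, x + 1, x + 2, x + 3}" by auto
  thus ?thesis by (simp add: algebra_simps)
qed

definition ind :: "bool \<Rightarrow> int" where "ind Q = (if Q then 1 else 0)"

lemma card1_int: "int (card ({a} \<inter> A)) = ind (a \<in> A)" unfolding ind_def by simp
lemma card2_int: "a \<noteq> b \<Longrightarrow> int (card ({a, b} \<inter> A)) = ind (a \<in> A) + ind (b \<in> A)"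
  unfolding ind_def by (cases "a \<in> A"; cases "b \<in> A") (auto simp: Int_insert_left)

lemma leaf_bnd: "(if X then 4 * ind Z - 3 else 0) \<le> ind Z"
  by (cases X; cases Z) (simp_all add: ind_def)
lemma pair_bnd: "(if X then 4 * ind Z - 5 else 0) + (if Y then 4 * (ind Z + ind X) - 5 else 0) \<le> 2 * ind Z"
  by (cases X; cases Y; cases Z) (simp_all add: ind_def)
lemma gad_bnd: "(if X0 then 4 * ind Z - 5 else 0) + (if X1 then 4 * ind X0 - 5 else 0)
     + (if X2 then 4 * ind X1 - 5 else 0) + (if X3 then 4 * (ind X1 + ind X2) - 5 else (0::int)) \<le> 0"
  by (cases X0; cases X1; cases X2; cases X3; cases Z) (simp_all add: ind_def)

locale GG =
  fixes l K t :: nat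
  assumes lK: "l \<le> K" and evK: "even (K - l)" and K7: "7 \<le> K"
begin

definition NN where "NN = Suc K + 4 * t"

definition bk :: "nat \<Rightarrow> nat set" where
  "bk v = (if v = 0 then {} else if v \<le> K then (if l < v \<and> even (v - l) then {0, v - 1} else {0})
     else if (v - Suc K) mod 4 = 0 then {0}
     else if (v - Suc K) mod 4 = 3 then {v - 2, v - 1} else {v - 1})"

definition VV where "VV = {..<NN}"
definition EE where "EE = {{u, v} | u v. v < NN \<and> u \<in> bk v}"

lemma bk_lt: "u \<in> bk v \<Longrightarrow> u < v"
  unfolding bk_def by (auto split: if_splits)

lemma gadget_decomp:
  assumes "K < v" "v < NN"
  obtains j r where "j < t" "r < 4" "v = Suc K + 4*j + r" "(v - Suc K) mod 4 = r"
proof -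
  define q where "q = v - Suc K"
  define j where "j = q div 4"
  define r where "r = q mod 4"
  have q: "q = 4*j + r" unfolding j_def r_def by simp
  have v: "v = Suc K + 4*j + r" using assms(1) q unfolding q_def by linarith
  have r4: "r < 4" unfolding r_def by simp
  have "j < t" using assms(2) v unfolding NN_def by linarith
  moreover have "(v - Suc K) mod 4 = r" unfolding r_def q_def ..
  ultimately show ?thesis using that[of j r] v r4 by blast
qed

lemma bk_hub0: "1 \<le> v \<Longrightarrow> v \<le> K \<Longrightarrow> 0 \<in> bk v" unfolding bk_def by simp
lemma bk_hub1: "l < v \<Longrightarrow> v \<le> K \<Longrightarrow> even (v - l) \<Longrightarrow> bk v = {0, v - 1}" unfolding bk_def by simp
lemma bk_hub2: assumes "1 \<le> v" "v \<le> K" "\<not> (l < v \<and> even (v - l))" shows "bk v = {0}"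
proof -
  have c1: "(v = 0) = False" using assms(1) by simp
  have c2: "(v \<le> K) = True" using assms(2) by blast
  have c3: "(l < v \<and> even (v - l)) = False" using assms(3) by blast
  show ?thesis unfolding bk_def c1 c2 c3 if_False if_True ..
qed
lemma bk_gen: "bk (Suc K + 4*j + r) = (if r mod 4 = 0 then {0} else if r mod 4 = 3 then {Suc K + 4*j + r - 2, Suc K + 4*j + r - 1} else {Suc K + 4*j + r - 1})"
proof -
  have a: "Suc K + 4*j + r \<noteq> 0" "\<not> Suc K + 4*j + r \<le> K" by simp_all
  have b: "(Suc K + 4*j + r - Suc K) mod 4 = r mod 4" by simp
  show ?thesis unfolding bk_def using a b by (simp only: if_False if_True)
qed
lemma bk_g0: "bk (Suc K + 4*j) = {0}" using bk_gen[of j 0] by simp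
lemma bk_g1: "bk (Suc K + 4*j + 1) = {Suc K + 4*j}"
proof -
  have a: "(Suc K + 4*j + 1 = 0) = False" "(Suc K + 4*j + 1 \<le> K) = False"
     "Suc K + 4*j + 1 - 1 = Suc K + 4*j" by simp_all
  have m0: "Suc K + 4*j + 1 - Suc K = 1 + 4*j" by simp
  have m1: "(1 + 4*j) mod 4 = (1::nat)" by (simp only: mod_mult_self2) simp
  have m: "(Suc K + 4*j + 1 - Suc K) mod 4 = 1" unfolding m0 m1 ..
  show ?thesis unfolding bk_def a m by simp
qed
lemma bk_g2: "bk (Suc K + 4*j + 2) = {Suc K + 4*j + 1}"
proof -
  have a: "(Suc K + 4*j + 2 = 0) = False" "(Suc K + 4*j + 2 \<le> K) = False"
     "Suc K + 4*j + 2 - 1 = Suc K + 4*j + 1" by simp_all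
  have m0: "Suc K + 4*j + 2 - Suc K = 2 + 4*j" by simp
  have m1: "(2 + 4*j) mod 4 = (2::nat)" by (simp only: mod_mult_self2) simp
  have m: "(Suc K + 4*j + 2 - Suc K) mod 4 = 2" unfolding m0 m1 ..
  show ?thesis unfolding bk_def a m by simp
qed
lemma bk_g3: "bk (Suc K + 4*j + 3) = {Suc K + 4*j + 1, Suc K + 4*j + 2}"
proof -
  have a: "(Suc K + 4*j + 3 = 0) = False" "(Suc K + 4*j + 3 \<le> K) = False"
     "Suc K + 4*j + 3 - 1 = Suc K + 4*j + 2"
     "Suc K + 4*j + 3 - 2 = Suc K + 4*j + 1" by simp_all
  have m0: "Suc K + 4*j + 3 - Suc K = 3 + 4*j" by simp
  have m1: "(3 + 4*j) mod 4 = (3::nat)" by (simp only: mod_mult_self2) simp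
  have m: "(Suc K + 4*j + 3 - Suc K) mod 4 = 3" unfolding m0 m1 ..
  show ?thesis unfolding bk_def a m by simp
qed
lemma bk_0: "bk 0 = {}" unfolding bk_def by simp

lemma edge_cases:
  assumes "u \<in> bk v" "v < NN"
  shows "(u = 0 \<and> 1 \<le> v \<and> v \<le> K) \<or> (l < v \<and> v \<le> K \<and> even (v - l) \<and> u = v - 1) \<or>
    (\<exists>j<t. (u = 0 \<and> v = Suc K + 4*j) \<or> (u = Suc K + 4*j \<and> v = Suc K + 4*j + 1) \<or>
       (u = Suc K + 4*j + 1 \<and> v = Suc K + 4*j + 2) \<or> (u = Suc K + 4*j + 1 \<and> v = Suc K + 4*j + 3) \<or>
       (u = Suc K + 4*j + 2 \<and> v = Suc K + 4*j + 3))"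
proof (cases "v \<le> K")
  case True
  have "v \<noteq> 0"
  proof
    assume "v = 0" thus False using assms(1) bk_0 by simp
  qed
  show ?thesis
  proof (cases "l < v \<and> even (v - l)")
    case c: True
    have "u = 0 \<or> u = v - 1" using assms(1) bk_hub1[of v] True c by blast
    moreover have "1 \<le> v" using \<open>v \<noteq> 0\<close> by linarith
    ultimately show ?thesis using True c by blast
  next
    case c: False
    have "1 \<le> v" using \<open>v \<noteq> 0\<close> by linarith
    hence "u = 0" using assms(1) bk_hub2[of v] True c by blast
    then show ?thesis using True \<open>1 \<le> v\<close> by blast
  qed
next
  case False
  then have "K < v" by linarith
  then obtain j r where jr: "j < t" "r < 4" "v = Suc K + 4*j + r" using gadget_decomp assms(2) by blast
  let ?D = "(u = 0 \<and> v = Suc K + 4*j) \<or> (u = Suc K + 4*j \<and> v = Suc K + 4*j + 1) \<or>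
       (u = Suc K + 4*j + 1 \<and> v = Suc K + 4*j + 2) \<or> (u = Suc K + 4*j + 1 \<and> v = Suc K + 4*j + 3) \<or>
       (u = Suc K + 4*j + 2 \<and> v = Suc K + 4*j + 3)"
  have "r = 0 \<or> r = 1 \<or> r = 2 \<or> r = 3" using jr(2) by auto
  hence ?D
  proof (elim disjE)
    assume "r = 0" thus ?D using assms(1) jr(3) bk_g0[of j] by simp
  next
    assume "r = 1" thus ?D using assms(1) jr(3) bk_g1[of j] by simp
  next
    assume "r = 2" thus ?D using assms(1) jr(3) bk_g2[of j] by simp
  next
    assume "r = 3" thus ?D using assms(1) jr(3) bk_g3[of j] by auto
  qed
  hence "\<exists>j<t. (u = 0 \<and> v = Suc K + 4*j) \<or> (u = Suc K + 4*j \<and> v = Suc K + 4*j + 1) \<or>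
       (u = Suc K + 4*j + 1 \<and> v = Suc K + 4*j + 2) \<or> (u = Suc K + 4*j + 1 \<and> v = Suc K + 4*j + 3) \<or>
       (u = Suc K + 4*j + 2 \<and> v = Suc K + 4*j + 3)" using jr(1) by blast
  thus ?thesis by blast
qed

lemma EE_iff: "e \<in> EE \<longleftrightarrow> (\<exists>u v. e = {u, v} \<and> v < NN \<and> u \<in> bk v)"
  unfolding EE_def by auto

lemma EE_I: "u \<in> bk v \<Longrightarrow> v < NN \<Longrightarrow> {u, v} \<in> EE"
  unfolding EE_def by auto

lemma long_edge:
  assumes "u \<in> bk v" "v < NN" "u + 2 \<le> v"
  shows "u = 0 \<or> (\<exists>j<t. u = Suc K + 4*j + 1 \<and> v = Suc K + 4*j + 3)"
proof -
  note ec = edge_cases[OF assms(1,2)]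
  show ?thesis
  proof (cases "u = 0")
    case False
    hence "\<not> (l < v \<and> v \<le> K \<and> even (v - l) \<and> u = v - 1)" using assms(3) by linarith
    with ec False obtain j where j: "j < t" "(u = Suc K + 4*j \<and> v = Suc K + 4*j + 1) \<or>
       (u = Suc K + 4*j + 1 \<and> v = Suc K + 4*j + 2) \<or> (u = Suc K + 4*j + 1 \<and> v = Suc K + 4*j + 3) \<or>
       (u = Suc K + 4*j + 2 \<and> v = Suc K + 4*j + 3)" by blast
    hence "u = Suc K + 4*j + 1 \<and> v = Suc K + 4*j + 3" using assms(3) by linarith
    thus ?thesis using j(1) by blast
  qed simp
qed

lemma noncross:
  assumes "u \<in> bk v" "v < NN" "u' \<in> bk v'" "v' < NN"
  shows "\<not> (u < u' \<and> u' < v \<and> v < v')"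
proof
  assume h: "u < u' \<and> u' < v \<and> v < v'"
  have le1: "u' + 2 \<le> v'" "u + 2 \<le> v" using h by linarith+
  have "u' \<noteq> 0" using h by linarith
  with long_edge[OF assms(3,4) le1(1)] obtain j where j: "u' = Suc K + 4*j + 1" "v' = Suc K + 4*j + 3" by blast
  hence vv: "v = Suc K + 4*j + 2" using h by linarith
  from long_edge[OF assms(1,2) le1(2)] show False
  proof
    assume u0: "u = 0"
    have "\<not> v \<le> K" using vv by linarith
    with edge_cases[OF assms(1,2)] u0 obtain j' where "v = Suc K + 4*j'" by auto
    with vv have "4*j + 2 = 4*j'" by linarith
    thus False by presburger
  next
    assume "\<exists>j<t. u = Suc K + 4*j + 1 \<and> v = Suc K + 4*j + 3"
    then obtain j' where "v = Suc K + 4*j' + 3" by blast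
    with vv have "4*j + 2 = 4*j' + 3" by linarith
    thus False by presburger
  qed
qed

lemma edge_obtain:
  assumes "e \<in> EE"
  obtains u v where "e = {u, v}" "u \<in> bk v" "v < NN" "u < v"
  using assms bk_lt unfolding EE_def by blast

lemma finite_EE: "finite EE"
proof -
  have "EE \<subseteq> Pow VV" unfolding VV_def by (auto elim!: edge_obtain)
  thus ?thesis by (rule finite_subset) (simp add: VV_def)
qed

lemma simple: "simple_graph VV EE"
  unfolding simple_graph_def
proof (intro conjI ballI)
  show "finite VV" by (simp add: VV_def)
  fix e assume "e \<in> EE"
  then obtain u v where "e = {u, v}" "u \<in> bk v" "v < NN" "u < v" by (rule edge_obtain)
  thus "\<exists>u v. u \<in> VV \<and> v \<in> VV \<and> u \<noteq> v \<and> e = {u, v}" unfolding VV_def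
    by (intro exI[of _ u] exI[of _ v]) auto
qed

definition pp :: "nat \<Rightarrow> complex" where "pp v = P (real v)"
definition gam :: "nat set \<Rightarrow> real \<Rightarrow> complex" where "gam e = linepath (pp (Min e)) (pp (Max e))"

lemma P_inj: "P a = P b \<Longrightarrow> a = b"
  unfolding P_def by (simp add: complex_eq_iff)

lemma gam_uv: "u < v \<Longrightarrow> gam {u, v} = linepath (P (real u)) (P (real v))"
  unfolding gam_def pp_def by simp

lemma outerplanar: "outerplanar VV EE"
  unfolding outerplanar_def
proof (intro exI[of _ pp] exI[of _ gam] conjI ballI impI)
  show "inj_on pp VV" unfolding inj_on_def pp_def using P_inj by (metis of_nat_eq_iff)
next
  fix e assume "e \<in> EE"
  then obtain u v where e: "e = {u, v}" "u \<in> bk v" "v < NN" "u < v" by (rule edge_obtain)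
  have ne: "P (real u) \<noteq> P (real v)" using e(4) P_inj by fastforce
  show "arc (gam e)" unfolding e(1) gam_uv[OF e(4)] using ne by simp
  show "{pathstart (gam e), pathfinish (gam e)} = pp ` e"
    unfolding e(1) gam_uv[OF e(4)] by (simp add: pp_def)
next
  fix e w assume "e \<in> EE" "w \<in> VV" "pp w \<in> path_image (gam e)"
  then obtain u v where e: "e = {u, v}" "u \<in> bk v" "v < NN" "u < v" by (elim edge_obtain)
  have "P (real w) \<in> closed_segment (P (real u)) (P (real v))"
    using \<open>pp w \<in> path_image (gam e)\<close> unfolding e(1) gam_uv[OF e(4)] pp_def by simp
  from vertex_on_seg[OF this] e(4) have "real w = real u \<or> real w = real v" by simp
  thus "w \<in> e" using e(1) by auto
next
  fix e e' assume "e \<in> EE" "e' \<in> EE" "e \<noteq> e'"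
  obtain u v where e: "e = {u, v}" "u \<in> bk v" "v < NN" "u < v" using \<open>e \<in> EE\<close> by (rule edge_obtain)
  obtain u' v' where e': "e' = {u', v'}" "u' \<in> bk v'" "v' < NN" "u' < v'" using \<open>e' \<in> EE\<close> by (rule edge_obtain)
  have nc1: "\<not> (u < u' \<and> u' < v \<and> v < v')" by (rule noncross[OF e(2,3) e'(2,3)])
  have nc2: "\<not> (u' < u \<and> u < v' \<and> v' < v)" by (rule noncross[OF e'(2,3) e(2,3)])
  have neq: "(real u, real v) \<noteq> (real u', real v')" using \<open>e \<noteq> e'\<close> e(1) e'(1) by auto
  show "path_image (gam e) \<inter> path_image (gam e') \<subseteq> pp ` (e \<inter> e')"
  proof
    fix z assume "z \<in> path_image (gam e) \<inter> path_image (gam e')"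
    hence z: "z \<in> closed_segment (P (real u)) (P (real v))" "z \<in> closed_segment (P (real u')) (P (real v'))"
      unfolding e(1) e'(1) gam_uv[OF e(4)] gam_uv[OF e'(4)] by auto
    have "(z = P (real u) \<and> (real u = real u' \<or> real u = real v')) \<or> (z = P (real v) \<and> (real v = real u' \<or> real v = real v'))"
      by (rule seg_inter) (use e(4) e'(4) nc1 nc2 neq z in auto)
    thus "z \<in> pp ` (e \<inter> e')" unfolding e(1) e'(1) pp_def by auto
  qed
next
  fix w assume "w \<in> VV"
  let ?S = "pp ` VV \<union> (\<Union>e\<in>EE. path_image (gam e))"
  have "?S \<subseteq> TT"
  proof
    fix z assume "z \<in> ?S"
    then show "z \<in> TT"
    proof
      assume "z \<in> pp ` VV" thus ?thesis using P_TT unfolding pp_def by auto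
    next
      assume "z \<in> (\<Union>e\<in>EE. path_image (gam e))"
      then obtain e where "e \<in> EE" "z \<in> path_image (gam e)" by blast
      then obtain u v where e: "e = {u, v}" "u \<in> bk v" "v < NN" "u < v" by (elim edge_obtain)
      have "z \<in> closed_segment (P (real u)) (P (real v))"
        using \<open>z \<in> path_image (gam e)\<close> unfolding e(1) gam_uv[OF e(4)] by simp
      thus ?thesis using seg_TT[of "real u" "real v"] e(4) by auto
    qed
  qed
  hence "- TT \<subseteq> outside ?S" by (intro outside_subset_convex convex_TT)
  hence "closure (- TT) \<subseteq> closure (outside ?S)" by (rule closure_mono)
  thus "pp w \<in> closure (outside ?S)" using P_closure unfolding pp_def by auto
qed

lemma NN_gt: "K < NN" unfolding NN_def by simp

lemma inc_leaf:
  assumes "1 \<le> w" "w \<le> l"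
  shows "{e \<in> EE. w \<in> e} = {{0, w}}"
proof
  have wK: "w \<le> K" using assms lK by linarith
  have "0 \<in> bk w" using bk_hub0[OF assms(1) wK] .
  hence "{0, w} \<in> EE" using EE_I[of 0 w] wK NN_gt by linarith
  thus "{{0, w}} \<subseteq> {e \<in> EE. w \<in> e}" by simp
next
  show "{e \<in> EE. w \<in> e} \<subseteq> {{0, w}}"
  proof
    fix e assume "e \<in> {e \<in> EE. w \<in> e}"
    hence eE: "e \<in> EE" and we: "w \<in> e" by auto
    obtain u v where e: "e = {u, v}" "u \<in> bk v" "v < NN" "u < v" using eE by (rule edge_obtain)
    have wK: "w \<le> K" using assms lK by linarith
    have bw: "bk w = {0}" using bk_hub2[OF assms(1) wK] assms(2) by linarith
    show "e \<in> {{0, w}}"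
    proof (cases "w = v")
      case True
      then show ?thesis using e(1,2) bw by auto
    next
      case False
      hence wu: "w = u" using we e(1) by auto
      note ec = edge_cases[OF e(2,3)]
      have False
      proof -
        have "u \<noteq> 0" using wu assms(1) by linarith
        moreover have "\<not> (l < v \<and> v \<le> K \<and> even (v - l) \<and> u = v - 1)"
        proof
          assume h: "l < v \<and> v \<le> K \<and> even (v - l) \<and> u = v - 1"
          hence "v = Suc l" using wu assms(2) by linarith
          hence "v - l = 1" by simp
          thus False using h by simp
        qed
        moreover have "\<not> (\<exists>j<t. (u = Suc K + 4*j \<and> v = Suc K + 4*j + 1) \<or>
           (u = Suc K + 4*j + 1 \<and> v = Suc K + 4*j + 2) \<or> (u = Suc K + 4*j + 1 \<and> v = Suc K + 4*j + 3) \<or>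
           (u = Suc K + 4*j + 2 \<and> v = Suc K + 4*j + 3))" using wu wK by auto
        ultimately show False using ec by blast
      qed
      thus ?thesis ..
    qed
  qed
qed

lemma card_ne1: "finite S \<Longrightarrow> a \<in> S \<Longrightarrow> b \<in> S \<Longrightarrow> a \<noteq> b \<Longrightarrow> card S \<noteq> 1"
  by (metis card_1_singletonE singletonD)

lemma inc_two:
  assumes "w < NN" "\<not> (1 \<le> w \<and> w \<le> l)"
  shows "\<exists>e1 e2. e1 \<in> EE \<and> e2 \<in> EE \<and> w \<in> e1 \<and> w \<in> e2 \<and> e1 \<noteq> e2"
proof -
  have K1: "(1::nat) \<le> K" "(2::nat) \<le> K" using K7 by linarith+
  show ?thesis
  proof (cases "w = 0")
    case True
    have b1: "0 \<in> bk 1" using bk_hub0[of 1] K1 by simp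
    have b2: "0 \<in> bk 2" using bk_hub0[of 2] K1 by simp
    have n1: "1 < NN" "2 < NN" using NN_gt K1 by linarith+
    have "{0, 1} \<in> EE" by (rule EE_I[OF b1 n1(1)])
    moreover have "{0, 2} \<in> EE" by (rule EE_I[OF b2 n1(2)])
    moreover have "{0::nat, 1} \<noteq> {0, 2}" by (simp add: doubleton_eq_iff)
    ultimately show ?thesis using True by (intro exI[of _ "{0, 1}"] exI[of _ "{0, 2}"]) simp
  next
    case w0: False
    show ?thesis
    proof (cases "w \<le> K")
      case wK: True
      have lw: "l < w" using assms(2) w0 by linarith
      have e0: "{0, w} \<in> EE" using EE_I[OF bk_hub0[OF _ wK]] w0 wK NN_gt by simp
      show ?thesis
      proof (cases "even (w - l)")
        case True
        have "w \<noteq> 1"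
        proof
          assume "w = 1" hence "w - l = 1" using lw by simp
          thus False using True by simp
        qed
        have "w - 1 \<in> bk w" using bk_hub1[OF lw wK True] by simp
        hence "{w - 1, w} \<in> EE" using EE_I wK NN_gt by simp
        moreover have "{0, w} \<noteq> {w - 1, w}" using \<open>w \<noteq> 1\<close> w0 by (auto simp: doubleton_eq_iff)
        ultimately show ?thesis using e0 by (intro exI[of _ "{0, w}"] exI[of _ "{w - 1, w}"]) simp
      next
        case False
        have "w \<noteq> K"
        proof
          assume "w = K" thus False using False evK by simp
        qed
        hence w1K: "w + 1 \<le> K" using wK by linarith
        have "w + 1 - l = Suc (w - l)" using lw by linarith
        hence ev: "even (w + 1 - l)" using False by simp
        have "w \<in> bk (w + 1)" using bk_hub1[OF _ w1K ev] lw by simp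
        hence "{w, w + 1} \<in> EE" using EE_I w1K NN_gt by simp
        moreover have "{0, w} \<noteq> {w, w + 1}" using w0 by (auto simp: doubleton_eq_iff)
        ultimately show ?thesis using e0 by (intro exI[of _ "{0, w}"] exI[of _ "{w, w + 1}"]) simp
      qed
    next
      case False
      then have "K < w" by linarith
      then obtain j r where jr: "j < t" "r < 4" "w = Suc K + 4*j + r" using gadget_decomp assms(1) by blast
      define b where "b = Suc K + 4*j"
      have lt: "b + 3 < NN" using jr(1) unfolding NN_def b_def by linarith
      have E0: "{0, b} \<in> EE" using EE_I[of 0 b] bk_g0 lt unfolding b_def by simp
      have E1: "{b, b + 1} \<in> EE" using EE_I[of b "b + 1"] bk_g1 lt unfolding b_def by simp
      have E2: "{b + 1, b + 2} \<in> EE" using EE_I[of "b + 1" "b + 2"] bk_g2 lt unfolding b_def by simp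
      have E3: "{b + 1, b + 3} \<in> EE" using EE_I[of "b + 1" "b + 3"] bk_g3 lt unfolding b_def by simp
      have E4: "{b + 2, b + 3} \<in> EE" using EE_I[of "b + 2" "b + 3"] bk_g3 lt unfolding b_def by simp
      have wb: "w = b + r" using jr(3) b_def by simp
      have b0: "b \<noteq> 0" unfolding b_def by simp
      have "r = 0 \<or> r = 1 \<or> r = 2 \<or> r = 3" using jr(2) by linarith
      thus ?thesis
      proof (elim disjE)
        assume "r = 0"
        moreover have "{0, b} \<noteq> {b, b + 1}" using b0 by (simp add: doubleton_eq_iff)
        ultimately show ?thesis using wb E0 E1 by (intro exI[of _ "{0, b}"] exI[of _ "{b, b + 1}"]) simp
      next
        assume "r = 1"
        moreover have "{b, b + 1} \<noteq> {b + 1, b + 2}" by (simp add: doubleton_eq_iff)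
        ultimately show ?thesis using wb E1 E2 by (intro exI[of _ "{b, b + 1}"] exI[of _ "{b + 1, b + 2}"]) simp
      next
        assume "r = 2"
        moreover have "{b + 1, b + 2} \<noteq> {b + 2, b + 3}" by (simp add: doubleton_eq_iff)
        ultimately show ?thesis using wb E2 E4 by (intro exI[of _ "{b + 1, b + 2}"] exI[of _ "{b + 2, b + 3}"]) simp
      next
        assume "r = 3"
        moreover have "{b + 1, b + 3} \<noteq> {b + 2, b + 3}" by (simp add: doubleton_eq_iff)
        ultimately show ?thesis using wb E3 E4 by (intro exI[of _ "{b + 1, b + 3}"] exI[of _ "{b + 2, b + 3}"]) simp
      qed
    qed
  qed
qed

lemma V1_eq: "V1 VV EE = {1..l}"
proof (rule set_eqI)
  fix w
  show "w \<in> V1 VV EE \<longleftrightarrow> w \<in> {1..l}"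
  proof (cases "1 \<le> w \<and> w \<le> l")
    case True
    have "w < NN" using True lK NN_gt by linarith
    moreover have "degree EE w = 1" unfolding degree_def using inc_leaf True by simp
    ultimately show ?thesis using True unfolding V1_def VV_def by simp
  next
    case False
    have "degree EE w \<noteq> 1" if wN: "w < NN"
    proof -
      obtain e1 e2 where "e1 \<in> EE" "e2 \<in> EE" "w \<in> e1" "w \<in> e2" "e1 \<noteq> e2" using inc_two[OF wN False] by blast
      thus ?thesis unfolding degree_def by (intro card_ne1[of _ e1 e2]) (auto intro: finite_subset[OF _ finite_EE])
    qed
    thus ?thesis using False unfolding V1_def VV_def by auto
  qed
qed

lemma card_V1: "card (V1 VV EE) = l" unfolding V1_eq by simp

lemma no_equitable: "\<not> (\<exists>f. equitable_4_coloring VV EE f)"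
proof
  assume "\<exists>f. equitable_4_coloring VV EE f"
  then obtain f where f: "equitable_4_coloring VV EE f" by blast
  have f4: "\<forall>v\<in>VV. f v < 4" and fe: "\<And>u v. {u, v} \<in> EE \<Longrightarrow> f u \<noteq> f v"
    and fb: "\<forall>i<4. \<forall>j<4. card {v\<in>VV. f v = i} \<le> card {v\<in>VV. f v = j} + 1"
    using f unfolding equitable_4_coloring_def by auto
  have V0: "0 \<in> VV" using NN_gt unfolding VV_def by simp
  define c where "c = f 0"
  have c4: "c < 4" using f4 V0 c_def by auto
  define S where "S = {v\<in>VV. f v = c}"
  define g where "g v = (v - Suc K) div 4" for v
  have gS: "\<And>v. v \<in> S - {0} \<Longrightarrow> \<exists>j r. j < t \<and> 1 \<le> r \<and> r < 4 \<and> v = Suc K + 4*j + r \<and> g v = j"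
  proof -
    fix v assume v: "v \<in> S - {0}"
    hence vN: "v < NN" and fv: "f v = f 0" and v0: "v \<noteq> 0" unfolding S_def VV_def c_def by auto
    have "\<not> v \<le> K"
    proof
      assume "v \<le> K"
      hence "{0, v} \<in> EE" using EE_I[OF bk_hub0[of v]] v0 vN by simp
      thus False using fe fv by metis
    qed
    hence "K < v" by linarith
    then obtain j r where jr: "j < t" "r < 4" "v = Suc K + 4*j + r" using gadget_decomp vN by blast
    have "r \<noteq> 0"
    proof
      assume "r = 0"
      hence "{0, v} \<in> EE" using EE_I[of 0 v] bk_g0[of j] jr(3) vN by simp
      thus False using fe fv by metis
    qed
    moreover have "g v = j"
    proof -
      have "v - Suc K = r + 4*j" using jr(3) by simp
      hence "g v = (r + 4*j) div 4" unfolding g_def by simp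
      also have "\<dots> = j" using jr(2) by simp
      finally show ?thesis .
    qed
    ultimately show "\<exists>j r. j < t \<and> 1 \<le> r \<and> r < 4 \<and> v = Suc K + 4*j + r \<and> g v = j" using jr by (intro exI[of _ j] exI[of _ r]) simp
  qed
  have inj: "inj_on g (S - {0})"
  proof
    fix v v' assume v: "v \<in> S - {0}" and v': "v' \<in> S - {0}" and gg: "g v = g v'"
    obtain j r where jr: "j < t" "1 \<le> r" "r < 4" "v = Suc K + 4*j + r" "g v = j" using gS[OF v] by blast
    obtain j' r' where jr': "j' < t" "1 \<le> r'" "r' < 4" "v' = Suc K + 4*j' + r'" "g v' = j'" using gS[OF v'] by blast
    have jj: "j' = j" using gg jr(5) jr'(5) by simp
    have fvv: "f v = f v'" using v v' unfolding S_def by simp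
    have lt: "Suc K + 4*j + 3 < NN" using jr(1) unfolding NN_def by linarith
    define b where "b = Suc K + 4*j"
    have E2: "{b + 1, b + 2} \<in> EE" using EE_I[of "b + 1" "b + 2"] bk_g2 lt unfolding b_def by simp
    have E3: "{b + 1, b + 3} \<in> EE" using EE_I[of "b + 1" "b + 3"] bk_g3 lt unfolding b_def by simp
    have E4: "{b + 2, b + 3} \<in> EE" using EE_I[of "b + 2" "b + 3"] bk_g3 lt unfolding b_def by simp
    have vb: "v = b + r" "v' = b + r'" using jr(4) jr'(4) jj b_def by simp_all
    show "v = v'"
    proof (rule ccontr)
      assume "v \<noteq> v'"
      hence "r \<noteq> r'" using vb by simp
      have "r = 1 \<or> r = 2 \<or> r = 3" "r' = 1 \<or> r' = 2 \<or> r' = 3" using jr(2,3) jr'(2,3) by linarith+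
      hence "{v, v'} \<in> EE"
        using \<open>r \<noteq> r'\<close> vb E2 E3 E4 by (auto simp: insert_commute)
      thus False using fe fvv by metis
    qed
  qed
  have sub: "g ` (S - {0}) \<subseteq> {..<t}"
  proof
    fix y assume "y \<in> g ` (S - {0})"
    then obtain v where "v \<in> S - {0}" "y = g v" by blast
    thus "y \<in> {..<t}" using gS[of v] by auto
  qed
  have cSd: "card (S - {0}) \<le> t" using card_inj_on_le[OF inj sub] by simp
  have fS: "finite S" unfolding S_def VV_def by simp
  have "card S \<le> card (insert 0 (S - {0}))" by (rule card_mono) (use fS in auto)
  also have "\<dots> = Suc (card (S - {0}))" by (rule card_insert_disjoint) (use fS in auto)
  finally have cS: "card S \<le> t + 1" using cSd by linarith
  define C where "C i = {v\<in>VV. f v = i}" for i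
  have VU: "VV = (\<Union>i\<in>{..<4::nat}. C i)" unfolding C_def using f4 by auto
  have "card VV = (\<Sum>i<4. card (C i))"
    unfolding VU by (rule card_UN_disjoint) (auto simp: C_def VV_def)
  also have "\<dots> = card (C c) + (\<Sum>i\<in>{..<4} - {c}. card (C i))"
    using c4 by (simp add: sum.remove)
  also have "\<dots> \<le> card S + (\<Sum>i\<in>{..<4} - {c}. card S + 1)"
  proof -
    have "\<And>i. i \<in> {..<4} - {c} \<Longrightarrow> card (C i) \<le> card S + 1"
      using fb c4 unfolding C_def S_def by auto
    hence "(\<Sum>i\<in>{..<4} - {c}. card (C i)) \<le> (\<Sum>i\<in>{..<4} - {c}. card S + 1)" by (rule sum_mono)
    moreover have "C c = S" unfolding C_def S_def ..
    ultimately show ?thesis by simp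
  qed
  also have "\<dots> = card S + 3 * (card S + 1)" using c4 by simp
  finally have "card VV \<le> 4 * card S + 3" by simp
  moreover have "card VV = NN" unfolding VV_def by simp
  ultimately show False using cS K7 unfolding NN_def by linarith
qed

definition TT' :: "nat set \<Rightarrow> nat \<Rightarrow> int" where
  "TT' A v = (if v \<in> A then 4 * int (card (bk v \<inter> A)) - 5 + (if 1 \<le> v \<and> v \<le> l then 2 else 0) else 0)"

lemma count_edges:
  assumes "A \<subseteq> VV"
  shows "induced_edges EE A = (\<Sum>v\<in>A. card (bk v \<inter> A))"
proof -
  let ?h = "\<lambda>(v::nat, u::nat). {u, v}"
  have fA: "finite A" using assms unfolding VV_def by (meson finite_lessThan finite_subset)
  have eq: "{e\<in>EE. e \<subseteq> A} = ?h ` (SIGMA v:A. bk v \<inter> A)"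
  proof
    show "{e\<in>EE. e \<subseteq> A} \<subseteq> ?h ` (SIGMA v:A. bk v \<inter> A)"
    proof
      fix e assume "e \<in> {e\<in>EE. e \<subseteq> A}"
      hence eE: "e \<in> EE" and eA: "e \<subseteq> A" by auto
      obtain u v where e: "e = {u, v}" "u \<in> bk v" "v < NN" "u < v" using eE by (rule edge_obtain)
      have "(v, u) \<in> (SIGMA v:A. bk v \<inter> A)" using e eA by auto
      moreover have "e = ?h (v, u)" using e by simp
      ultimately show "e \<in> ?h ` (SIGMA v:A. bk v \<inter> A)" by (rule rev_image_eqI)
    qed
  next
    show "?h ` (SIGMA v:A. bk v \<inter> A) \<subseteq> {e\<in>EE. e \<subseteq> A}"
    proof
      fix e assume "e \<in> ?h ` (SIGMA v:A. bk v \<inter> A)"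
      then obtain v u where vu: "v \<in> A" "u \<in> bk v" "u \<in> A" "e = {u, v}" by auto
      have "v < NN" using vu(1) assms unfolding VV_def by auto
      hence "e \<in> EE" using EE_I[OF vu(2)] vu(4) by simp
      thus "e \<in> {e\<in>EE. e \<subseteq> A}" using vu by auto
    qed
  qed
  have inj: "inj_on ?h (SIGMA v:A. bk v \<inter> A)"
  proof (rule inj_onI, clarify)
    fix v u v' u' assume h: "u \<in> bk v" "u' \<in> bk v'" "{u, v} = {u', v'}"
    have "u < v" "u' < v'" using bk_lt h by auto
    thus "v = v' \<and> u = u'" using h(3) by (auto simp: doubleton_eq_iff)
  qed
  have "induced_edges EE A = card (?h ` (SIGMA v:A. bk v \<inter> A))" unfolding induced_edges_def eq ..
  also have "\<dots> = card (SIGMA v:A. bk v \<inter> A)" by (rule card_image[OF inj])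
  also have "\<dots> = (\<Sum>v\<in>A. card (bk v \<inter> A))" using fA by simp
  finally show ?thesis .
qed

lemma rho_sum:
  assumes "A \<subseteq> VV"
  shows "rho4_set VV EE A = (\<Sum>v\<in>{0..<NN}. TT' A v)"
proof -
  have fA: "finite A" using assms unfolding VV_def by (meson finite_lessThan finite_subset)
  have c1: "int (card (A \<inter> {1..l})) = (\<Sum>v\<in>A. (if 1 \<le> v \<and> v \<le> l then 1 else 0))"
  proof -
    have "int (card (A \<inter> {1..l})) = (\<Sum>v\<in>A \<inter> {1..l}. 1)" by simp
    also have "\<dots> = (\<Sum>v\<in>A. (if v \<in> {1..l} then 1 else 0))" by (rule sum.inter_restrict[OF fA])
    finally show ?thesis by simp
  qed
  have "rho4_set VV EE A = 4 * int (\<Sum>v\<in>A. card (bk v \<inter> A)) - 5 * int (card A) + 2 * int (card (A \<inter> {1..l}))"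
    unfolding rho4_set_def count_edges[OF assms] V1_eq ..
  also have "\<dots> = (\<Sum>v\<in>A. 4 * int (card (bk v \<inter> A)) - 5 + (if 1 \<le> v \<and> v \<le> l then 2 else 0))"
  proof -
    have a: "2 * (\<Sum>v\<in>A. (if 1 \<le> v \<and> v \<le> l then 1 else 0)) = (\<Sum>v\<in>A. (if 1 \<le> v \<and> v \<le> l then 2 else (0::int)))"
      by (simp add: sum_distrib_left) (rule sum.cong, auto)
    have b: "(\<Sum>v\<in>A. 4 * int (card (bk v \<inter> A)) - 5 + (if 1 \<le> v \<and> v \<le> l then 2 else 0)) =
       (\<Sum>v\<in>A. 4 * int (card (bk v \<inter> A))) - (\<Sum>v\<in>A. 5) + (\<Sum>v\<in>A. (if 1 \<le> v \<and> v \<le> l then 2 else (0::int)))"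
      by (simp add: sum.distrib sum_subtractf)
    show ?thesis unfolding c1 a[symmetric] b by (simp add: sum_distrib_left of_nat_sum)
  qed
  also have "\<dots> = (\<Sum>v\<in>{0..<NN} \<inter> A. 4 * int (card (bk v \<inter> A)) - 5 + (if 1 \<le> v \<and> v \<le> l then 2 else 0))"
  proof -
    have "{0..<NN} \<inter> A = A" using assms unfolding VV_def by auto
    thus ?thesis by simp
  qed
  also have "\<dots> = (\<Sum>v\<in>{0..<NN}. TT' A v)"
    unfolding TT'_def by (rule sum.inter_restrict) simp
  finally show ?thesis .
qed

lemma T0: "TT' A 0 = (if 0 \<in> A then -5 else 0)"
  unfolding TT'_def bk_0 by simp

lemma Tleaf: assumes "1 \<le> v" "v \<le> l" shows "TT' A v = (if v \<in> A then 4 * ind (0 \<in> A) - 3 else 0)"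
proof -
  have "bk v = {0}" using bk_hub2[of v] assms lK by linarith
  hence "int (card (bk v \<inter> A)) = ind (0 \<in> A)" using card1_int by simp
  thus ?thesis unfolding TT'_def using assms by simp
qed

definition pp2 where "pp2 = (K - l) div 2"
lemma Kp: "K = l + 2 * pp2"
proof -
  have "K - l = 2 * pp2" unfolding pp2_def using evK by simp
  thus ?thesis using lK by linarith
qed

lemma Tpair:
  assumes "i < pp2"
  defines "a \<equiv> 1 + l + 2*i"
  shows "TT' A a + TT' A (a + 1) = (if a \<in> A then 4 * ind (0 \<in> A) - 5 else 0) +
      (if a + 1 \<in> A then 4 * (ind (0 \<in> A) + ind (a \<in> A)) - 5 else 0)"
proof -
  have aK: "a + 1 \<le> K" using assms Kp by linarith
  have la: "l < a" "\<not> a \<le> l" "\<not> a + 1 \<le> l" unfolding a_def by linarith+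
  have o: "a - l = 1 + 2*i" unfolding a_def by simp
  have e: "a + 1 - l = 2 + 2*i" unfolding a_def by simp
  have "\<not> even (a - l)" unfolding o by simp
  hence b1: "bk a = {0}" using bk_hub2[of a] aK la by linarith
  have "even (a + 1 - l)" unfolding e by simp
  hence b2: "bk (a + 1) = {0, a}" using bk_hub1[of "a + 1"] aK la by simp
  have a0: "0 \<noteq> a" using la by linarith
  show ?thesis unfolding TT'_def b1 b2 card1_int card2_int[OF a0] using la by simp
qed

lemma Tgad:
  fixes j :: nat
  defines "b \<equiv> Suc K + 4*j"
  shows "TT' A b + TT' A (b + 1) + TT' A (b + 2) + TT' A (b + 3) =
     (if b \<in> A then 4 * ind (0 \<in> A) - 5 else 0) + (if b + 1 \<in> A then 4 * ind (b \<in> A) - 5 else 0)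
     + (if b + 2 \<in> A then 4 * ind (b + 1 \<in> A) - 5 else 0)
     + (if b + 3 \<in> A then 4 * (ind (b + 1 \<in> A) + ind (b + 2 \<in> A)) - 5 else 0)"
proof -
  have n: "\<not> b \<le> l" "\<not> b + 1 \<le> l" "\<not> b + 2 \<le> l" "\<not> b + 3 \<le> l" unfolding b_def using lK by linarith+
  have ne: "b + 1 \<noteq> b + 2" by simp
  show ?thesis unfolding TT'_def b_def bk_g0 bk_g1 bk_g2 bk_g3 card1_int card2_int[OF ne[unfolded b_def]]
    using n unfolding b_def by simp
qed

lemma sum_split:
  "sum f {0..<NN} = f 0 + (\<Sum>j<l. f (1 + j)) + (\<Sum>i<pp2. f (1 + l + 2*i) + f (1 + l + 2*i + 1))
     + (\<Sum>j<t. f (Suc K + 4*j) + f (Suc K + 4*j + 1) + f (Suc K + 4*j + 2) + f (Suc K + 4*j + 3))"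
proof -
  have k1: "Suc K = 1 + l + 2 * pp2" using Kp by simp
  have "sum f {0..<NN} = sum f {0..<Suc K} + sum f {Suc K..<NN}"
    by (rule sum.atLeastLessThan_concat[symmetric]) (auto simp: NN_def)
  moreover have "sum f {0..<Suc K} = sum f {0..<1} + sum f {1..<1 + l} + sum f {1 + l..<1 + l + 2 * pp2}"
  proof -
    have "sum f {0..<1 + l + 2 * pp2} = sum f {0..<1 + l} + sum f {1 + l..<1 + l + 2 * pp2}"
      by (rule sum.atLeastLessThan_concat[symmetric]) auto
    moreover have "sum f {0..<1 + l} = sum f {0..<1} + sum f {1..<1 + l}"
      by (rule sum.atLeastLessThan_concat[symmetric]) auto
    ultimately show ?thesis unfolding k1 by simp
  qed
  moreover have "sum f {1..<1 + l} = (\<Sum>j<l. f (1 + j))"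
    using sum_blocks[of f 1 1 l] sum1 by simp
  moreover have "sum f {1 + l..<1 + l + 2 * pp2} = (\<Sum>i<pp2. f (1 + l + 2*i) + f (1 + l + 2*i + 1))"
    using sum_blocks[of f "1 + l" 2 pp2] sum2 by simp
  moreover have "sum f {Suc K..<NN} = (\<Sum>j<t. f (Suc K + 4*j) + f (Suc K + 4*j + 1) + f (Suc K + 4*j + 2) + f (Suc K + 4*j + 3))"
    unfolding NN_def sum_blocks[of f "Suc K" 4 t] sum4 by (rule refl)
  ultimately show ?thesis by simp
qed

lemma rho_le:
  assumes "A \<subseteq> VV"
  shows "rho4_set VV EE A \<le> int K - 5"
proof -
  let ?z = "ind (0 \<in> A)"
  have t0: "TT' A 0 = -5 * ?z" unfolding T0 ind_def by simp
  have t1: "(\<Sum>j<l. TT' A (1 + j)) \<le> (\<Sum>j<l. ?z)"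
  proof (rule sum_mono)
    fix j assume "j \<in> {..<l}"
    hence "1 \<le> 1 + j" "1 + j \<le> l" by auto
    show "TT' A (1 + j) \<le> ?z" unfolding Tleaf[OF \<open>1 \<le> 1 + j\<close> \<open>1 + j \<le> l\<close>] by (rule leaf_bnd)
  qed
  have t2: "(\<Sum>i<pp2. TT' A (1 + l + 2*i) + TT' A (1 + l + 2*i + 1)) \<le> (\<Sum>i<pp2. 2 * ?z)"
  proof (rule sum_mono)
    fix i assume "i \<in> {..<pp2}"
    hence "i < pp2" by simp
    show "TT' A (1 + l + 2*i) + TT' A (1 + l + 2*i + 1) \<le> 2 * ?z" unfolding Tpair[OF \<open>i < pp2\<close>] by (rule pair_bnd)
  qed
  have t3: "(\<Sum>j<t. TT' A (Suc K + 4*j) + TT' A (Suc K + 4*j + 1) + TT' A (Suc K + 4*j + 2) + TT' A (Suc K + 4*j + 3)) \<le> (\<Sum>j<t. 0)"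
  proof (rule sum_mono)
    fix j :: nat
    show "TT' A (Suc K + 4*j) + TT' A (Suc K + 4*j + 1) + TT' A (Suc K + 4*j + 2) + TT' A (Suc K + 4*j + 3) \<le> 0"
      unfolding Tgad by (rule gad_bnd)
  qed
  have "rho4_set VV EE A \<le> -5 * ?z + of_nat l * ?z + of_nat pp2 * (2 * ?z)"
    unfolding rho_sum[OF assms] sum_split t0 using t1 t2 t3 by simp
  also have "\<dots> = ?z * (int K - 5)"
  proof -
    have "int K = int l + 2 * int pp2" using Kp by simp
    thus ?thesis by (simp add: algebra_simps)
  qed
  also have "\<dots> \<le> int K - 5" using K7 by (simp add: ind_def)
  finally show ?thesis .
qed

lemma rho_A0: "rho4_set VV EE {0..K} = int K - 5"
proof -
  let ?A = "{0..K}"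
  have sub: "?A \<subseteq> VV" unfolding VV_def NN_def by auto
  have t0: "TT' ?A 0 = -5" unfolding T0 by simp
  have t1: "(\<Sum>j<l. TT' ?A (1 + j)) = (\<Sum>j<l. 1)"
  proof (rule sum.cong)
    fix j assume "j \<in> {..<l}"
    hence h: "1 \<le> 1 + j" "1 + j \<le> l" by auto
    hence "1 + j \<in> ?A" using lK by simp
    thus "TT' ?A (1 + j) = 1" unfolding Tleaf[OF h] by (simp add: ind_def)
  qed simp
  have t2: "(\<Sum>i<pp2. TT' ?A (1 + l + 2*i) + TT' ?A (1 + l + 2*i + 1)) = (\<Sum>i<pp2. 2)"
  proof (rule sum.cong)
    fix i assume "i \<in> {..<pp2}"
    hence h: "i < pp2" by simp
    hence "1 + l + 2*i \<in> ?A" "1 + l + 2*i + 1 \<in> ?A" using Kp by simp_all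
    thus "TT' ?A (1 + l + 2*i) + TT' ?A (1 + l + 2*i + 1) = 2" unfolding Tpair[OF h] by (simp add: ind_def)
  qed simp
  have t3: "(\<Sum>j<t. TT' ?A (Suc K + 4*j) + TT' ?A (Suc K + 4*j + 1) + TT' ?A (Suc K + 4*j + 2) + TT' ?A (Suc K + 4*j + 3)) = (\<Sum>j<t. 0)"
  proof (rule sum.cong)
    fix j :: nat
    show "TT' ?A (Suc K + 4*j) + TT' ?A (Suc K + 4*j + 1) + TT' ?A (Suc K + 4*j + 2) + TT' ?A (Suc K + 4*j + 3) = 0"
      unfolding Tgad by simp
  qed simp
  have "rho4_set VV EE ?A = -5 + int l + 2 * int pp2"
    unfolding rho_sum[OF sub] sum_split t0 t1 t2 t3 by simp
  thus ?thesis using Kp by simp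
qed

lemma rho4_val: "rho4 VV EE = int K - 5"
  unfolding rho4_def
proof (rule Max_eqI)
  show "finite (rho4_set VV EE ` Pow VV)" unfolding VV_def by simp
  show "\<And>y. y \<in> rho4_set VV EE ` Pow VV \<Longrightarrow> y \<le> int K - 5" using rho_le by auto
  show "int K - 5 \<in> rho4_set VV EE ` Pow VV"
    using rho_A0 by (intro rev_image_eqI[of "{0..K}"]) (auto simp: VV_def NN_def)
qed

lemma card_VV: "card VV = NN" unfolding VV_def by simp

end

theorem mainTheorem4:
  fixes n l :: nat
  assumes "l \<le> 8"
  shows "\<exists>(V :: nat set) (E :: nat set set).
           simple_graph V E \<and> outerplanar V E \<and> card V > n \<and>
           card (V1 V E) = l \<and> rho4 V E = 3 - sigma4 V E \<and>
           \<not> (\<exists>f. equitable_4_coloring V E f)"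
proof -
  define K where "K = (if even l then 8 else 7 :: nat)"
  have lK: "l \<le> K"
  proof (cases "even l")
    case True thus ?thesis using assms unfolding K_def by simp
  next
    case False
    hence "l \<noteq> 8" by auto
    thus ?thesis using False assms unfolding K_def by simp
  qed
  have evK: "even (K - l)"
  proof (cases "even l")
    case True thus ?thesis using lK unfolding K_def by simp
  next
    case False thus ?thesis using lK unfolding K_def by simp
  qed
  have K7: "7 \<le> K" unfolding K_def by simp
  interpret G: GG l K n using lK evK K7 by unfold_locales
  have sig: "sigma4 G.VV G.EE = int (l mod 2)" unfolding sigma4_def G.card_V1 ..
  have rh: "rho4 G.VV G.EE = 3 - sigma4 G.VV G.EE"
  proof -
    have "int K - 5 = 3 - int (l mod 2)" unfolding K_def by (cases "even l") (simp_all add: odd_iff_mod_2_eq_one)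
    thus ?thesis unfolding G.rho4_val sig .
  qed
  have cV: "card G.VV > n" unfolding G.card_VV G.NN_def by simp
  show ?thesis
    using G.simple G.outerplanar cV G.card_V1 rh G.no_equitable by blast
qed

end
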